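(* Let $F\colon\mathbf{A}\to\mathbf{C}$ be a discrete opfibration and let $J\colon\mathbf{A}\to\mathbf{B}$ be a cosieve, via which $\mathbf{A}$ is regarded as an out-degree-zero subcategory of $\mathbf{B}$. Let $B$ be an object of $\mathbf{B}$ not in $\mathbf{A}$ and let $C$ be an object of $\mathbf{C}$. Let $\sim$ be the equivalence relation on $\coprod_{A\in\mathrm{ob}\,\mathbf{A}}\mathbf{C}(FA,C)\times\mathbf{B}(B,A)$ generated by $(c,a\circ b)\sim(c\circ Fa,b)$ for all objects $A_1,A_2$ of $\mathbf{A}$, all $b\in\mathbf{B}(B,A_1)$, all $a\in\mathbf{A}(A_1,A_2)$ and all $c\in\mathbf{C}(FA_2,C)$. Then for all objects $A_1,A_2$ of $\mathbf{A}$, all $b_1\in\mathbf{B}(B,A_1)$, $b_2\in\mathbf{B}(B,A_2)$, $c_1\in\mathbf{C}(FA_1,C)$ and $c_2\in\mathbf{C}(FA_2,C)$, if $(c_1,b_1)\sim(c_2,b_2)$ then $\varphi_{F,A_1}(c_1)\circ b_1=\varphi_{F,A_2}(c_2)\circ b_2$.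
   Context: A functor $F\colon\mathbf{A}\to\mathbf{C}$ is a discrete opfibration if for each object $A$ of $\mathbf{A}$ and each morphism $c$ of $\mathbf{C}$ with domain $FA$ there is a unique morphism of $\mathbf{A}$ with domain $A$ mapped by $F$ to $c$; this unique morphism is denoted $\varphi_{F,A}(c)$. A cosieve is an injective-on-objects discrete opfibration; equivalently (up to isomorphism) the inclusion of an out-degree-zero subcategory, i.e. a subcategory such that every morphism of the ambient category whose domain lies in the subcategory belongs to the subcategory. $\mathbf{B}(X,Y)$ denotes the set of morphisms $X\to Y$ in $\mathbf{B}$; composites in the conclusion are taken in $\mathbf{B}$. *)

theory Defs
  imports Main
begin

text \<open>Small categories, given by a set of objects, a set of arrows, domain, codomain,
identities and composition. Comp g f denotes g composed after f (defined when Cod f = Dom g).\<close>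

record ('o, 'm) category =
  Obj :: "'o set"
  Arr :: "'m set"
  Dom :: "'m \<Rightarrow> 'o"
  Cod :: "'m \<Rightarrow> 'o"
  Id  :: "'o \<Rightarrow> 'm"
  Comp :: "'m \<Rightarrow> 'm \<Rightarrow> 'm"

definition is_category :: "('o, 'm) category \<Rightarrow> bool" where
  "is_category X \<longleftrightarrow>
     (\<forall>f \<in> Arr X. Dom X f \<in> Obj X \<and> Cod X f \<in> Obj X) \<and>
     (\<forall>x \<in> Obj X. Id X x \<in> Arr X \<and> Dom X (Id X x) = x \<and> Cod X (Id X x) = x) \<and>
     (\<forall>f \<in> Arr X. \<forall>g \<in> Arr X. Cod X f = Dom X g \<longrightarrow>
        Comp X g f \<in> Arr X \<and> Dom X (Comp X g f) = Dom X f \<and> Cod X (Comp X g f) = Cod X g) \<and>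
     (\<forall>f \<in> Arr X. Comp X f (Id X (Dom X f)) = f \<and> Comp X (Id X (Cod X f)) f = f) \<and>
     (\<forall>f \<in> Arr X. \<forall>g \<in> Arr X. \<forall>h \<in> Arr X. Cod X f = Dom X g \<longrightarrow> Cod X g = Dom X h \<longrightarrow>
        Comp X h (Comp X g f) = Comp X (Comp X h g) f)"

definition hom :: "('o, 'm) category \<Rightarrow> 'o \<Rightarrow> 'o \<Rightarrow> 'm set" where
  "hom X x y = {f \<in> Arr X. Dom X f = x \<and> Cod X f = y}"

definition is_functor :: "('o, 'm) category \<Rightarrow> ('p, 'n) category
    \<Rightarrow> ('o \<Rightarrow> 'p) \<Rightarrow> ('m \<Rightarrow> 'n) \<Rightarrow> bool" where
  "is_functor X Y Fo Fm \<longleftrightarrow> is_category X \<and> is_category Y \<and>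
     (\<forall>x \<in> Obj X. Fo x \<in> Obj Y) \<and>
     (\<forall>f \<in> Arr X. Fm f \<in> Arr Y \<and> Dom Y (Fm f) = Fo (Dom X f) \<and> Cod Y (Fm f) = Fo (Cod X f)) \<and>
     (\<forall>x \<in> Obj X. Fm (Id X x) = Id Y (Fo x)) \<and>
     (\<forall>f \<in> Arr X. \<forall>g \<in> Arr X. Cod X f = Dom X g \<longrightarrow> Fm (Comp X g f) = Comp Y (Fm g) (Fm f))"

definition discrete_opfibration :: "('o, 'm) category \<Rightarrow> ('p, 'n) category
    \<Rightarrow> ('o \<Rightarrow> 'p) \<Rightarrow> ('m \<Rightarrow> 'n) \<Rightarrow> bool" where
  "discrete_opfibration X Y Fo Fm \<longleftrightarrow> is_functor X Y Fo Fm \<and>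
     (\<forall>x \<in> Obj X. \<forall>c \<in> Arr Y. Dom Y c = Fo x \<longrightarrow>
        (\<exists>!a. a \<in> Arr X \<and> Dom X a = x \<and> Fm a = c))"

definition opfib_lift :: "('o, 'm) category \<Rightarrow> ('m \<Rightarrow> 'n) \<Rightarrow> 'o \<Rightarrow> 'n \<Rightarrow> 'm" where
  "opfib_lift X Fm x c = (THE a. a \<in> Arr X \<and> Dom X a = x \<and> Fm a = c)"

definition cosieve :: "('o, 'm) category \<Rightarrow> ('p, 'n) category
    \<Rightarrow> ('o \<Rightarrow> 'p) \<Rightarrow> ('m \<Rightarrow> 'n) \<Rightarrow> bool" where
  "cosieve X Y Jo Jm \<longleftrightarrow> discrete_opfibration X Y Jo Jm \<and> inj_on Jo (Obj X)"

end

theory Submission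
  imports Defs
begin

lemma lift_props:
  assumes F: "discrete_opfibration CA CC Fo Fm" and x: "x \<in> Obj CA"
    and c: "c \<in> Arr CC" "Dom CC c = Fo x"
  shows "opfib_lift CA Fm x c \<in> Arr CA \<and> Dom CA (opfib_lift CA Fm x c) = x
         \<and> Fm (opfib_lift CA Fm x c) = c"
proof -
  have "\<exists>!a. a \<in> Arr CA \<and> Dom CA a = x \<and> Fm a = c"
    using F x c unfolding discrete_opfibration_def by blast
  then show ?thesis unfolding opfib_lift_def by (rule theI')
qed

lemma lift_unique:
  assumes F: "discrete_opfibration CA CC Fo Fm" and x: "x \<in> Obj CA"
    and c: "c \<in> Arr CC" "Dom CC c = Fo x"
    and a: "a \<in> Arr CA" "Dom CA a = x" "Fm a = c"
  shows "opfib_lift CA Fm x c = a"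
proof -
  have "\<exists>!a. a \<in> Arr CA \<and> Dom CA a = x \<and> Fm a = c"
    using F x c unfolding discrete_opfibration_def by blast
  then show ?thesis unfolding opfib_lift_def using a by (simp add: the1_equality)
qed

theorem lemma5p3:
  fixes CA :: "('a, 'ma) category" and CB :: "('b, 'mb) category" and CC :: "('c, 'mc) category"
    and Fo :: "'a \<Rightarrow> 'c" and Fm :: "'ma \<Rightarrow> 'mc"
    and Jo :: "'a \<Rightarrow> 'b" and Jm :: "'ma \<Rightarrow> 'mb"
    and B :: 'b and C :: 'c
    and rel :: "'a \<times> 'mc \<times> 'mb \<Rightarrow> 'a \<times> 'mc \<times> 'mb \<Rightarrow> bool"
  assumes F: "discrete_opfibration CA CC Fo Fm"
    and J: "cosieve CA CB Jo Jm"
    and B: "B \<in> Obj CB" "B \<notin> Jo ` Obj CA"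
    and C: "C \<in> Obj CC"
    and rel_def: "rel = (\<lambda>p q. \<exists>A1 A2 b a c.
                      A1 \<in> Obj CA \<and> A2 \<in> Obj CA \<and>
                      b \<in> hom CB B (Jo A1) \<and> a \<in> hom CA A1 A2 \<and> c \<in> hom CC (Fo A2) C \<and>
                      p = (A2, c, Comp CB (Jm a) b) \<and> q = (A1, Comp CC c (Fm a), b))"
    and A1: "A1 \<in> Obj CA" and A2: "A2 \<in> Obj CA"
    and b1: "b1 \<in> hom CB B (Jo A1)" and b2: "b2 \<in> hom CB B (Jo A2)"
    and c1: "c1 \<in> hom CC (Fo A1) C" and c2: "c2 \<in> hom CC (Fo A2) C"
    and sim: "equivclp rel (A1, c1, b1) (A2, c2, b2)"
  shows "Comp CB (Jm (opfib_lift CA Fm A1 c1)) b1 = Comp CB (Jm (opfib_lift CA Fm A2 c2)) b2"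
proof -
  define G where "G = (\<lambda>(x::'a, c::'mc, b::'mb). Comp CB (Jm (opfib_lift CA Fm x c)) b)"
  have FF: "is_functor CA CC Fo Fm" using F unfolding discrete_opfibration_def by blast
  have JF: "is_functor CA CB Jo Jm" using J unfolding cosieve_def discrete_opfibration_def by blast
  have cA: "is_category CA" and cB: "is_category CB" and cC: "is_category CC"
    using FF JF unfolding is_functor_def by auto
  have stp: "G p = G q" if "rel p q" for p q
  proof -
    from that obtain X1 X2 b a c where
      X1: "X1 \<in> Obj CA" and X2: "X2 \<in> Obj CA" and b: "b \<in> hom CB B (Jo X1)"
      and a: "a \<in> hom CA X1 X2" and c: "c \<in> hom CC (Fo X2) C"
      and p: "p = (X2, c, Comp CB (Jm a) b)" and q: "q = (X1, Comp CC c (Fm a), b)"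
      unfolding rel_def by blast
    have ca: "c \<in> Arr CC" "Dom CC c = Fo X2" using c unfolding hom_def by auto
    have aa: "a \<in> Arr CA" "Dom CA a = X1" "Cod CA a = X2" using a unfolding hom_def by auto
    have ba: "b \<in> Arr CB" "Dom CB b = B" "Cod CB b = Jo X1" using b unfolding hom_def by auto
    obtain l where l: "l = opfib_lift CA Fm X2 c" by blast
    have lp: "l \<in> Arr CA" "Dom CA l = X2" "Fm l = c" using lift_props[OF F X2 ca] l by auto
    have Fa: "Fm a \<in> Arr CC" "Dom CC (Fm a) = Fo X1" "Cod CC (Fm a) = Fo X2"
      using FF aa unfolding is_functor_def by auto
    have ca2: "Comp CC c (Fm a) \<in> Arr CC" "Dom CC (Comp CC c (Fm a)) = Fo X1"
      using cC ca Fa unfolding is_category_def by auto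
    have la: "Comp CA l a \<in> Arr CA" "Dom CA (Comp CA l a) = X1"
      using cA lp aa unfolding is_category_def by auto
    have Fla: "Fm (Comp CA l a) = Comp CC c (Fm a)"
      using FF lp aa unfolding is_functor_def by auto
    have L: "opfib_lift CA Fm X1 (Comp CC c (Fm a)) = Comp CA l a"
      by (rule lift_unique[OF F X1 ca2 la Fla])
    have Jla: "Jm (Comp CA l a) = Comp CB (Jm l) (Jm a)"
      using JF lp aa unfolding is_functor_def by auto
    have Jl: "Jm l \<in> Arr CB" "Dom CB (Jm l) = Jo X2"
      using JF lp unfolding is_functor_def by auto
    have Ja: "Jm a \<in> Arr CB" "Dom CB (Jm a) = Jo X1" "Cod CB (Jm a) = Jo X2"
      using JF aa unfolding is_functor_def by auto
    have "Comp CB (Jm l) (Comp CB (Jm a) b) = Comp CB (Comp CB (Jm l) (Jm a)) b"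
      using cB Jl Ja ba unfolding is_category_def by auto
    then show ?thesis unfolding G_def p q using L Jla l by simp
  qed
  have "G (A1, c1, b1) = G (A2, c2, b2)"
    using sim unfolding equivclp_def
  proof (induction rule: rtranclp_induct)
    case base then show ?case by simp
  next
    case (step y z)
    then show ?case using stp[of y z] stp[of z y] by (auto simp: symclp_def)
  qed
  then show ?thesis unfolding G_def by simp
qed

end
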